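(* As formal power series in $Q$ with coefficients in $\mathbb{Z}[T]$, $$\sum_{k=1}^{\infty}\frac{F(k)}{\prod_{i=1}^{k}(1-Q^iT^{2(i-1)})^2}=\frac{1}{\prod_{i=1}^{\infty}(1-Q^iT^{2(i-1)})},$$ where $F(1)=Q^2T^2-Q+1$ and, for $k\ge2$, $F(k)$ is the sum of the two entries of $V_k=M_{k,k}M_{k,k-1}\cdots M_{k,2}V_{k,1}$ with $$V_{k,1}=\begin{bmatrix}Q^{2k}T^{4(k-1)}(T^2-1)\\ Q^kT^{2(k-1)}\end{bmatrix},\quad M_{k,s}=\begin{bmatrix}Q^{2(k-s+1)}T^{4(k-s)}(T^2-1)+(1-Q^{k-s+1}T^{2(k-s)})^2 & Q^{k-s+1}T^{2(k-s)}(T^2-1)\\ Q^{k-s+1}T^{2(k-s)} & Q^{2(k-s+1)}T^{4(k-s)}T^2\end{bmatrix}\ (2\le s\le k).$$ *)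

theory Defs
  imports "HOL-Analysis.Analysis" "HOL-Computational_Algebra.Computational_Algebra"
begin

type_synonym ps = "int poly fps"  \<comment> \<open>formal power series in Q over Z[T]\<close>

definition QQ :: ps where "QQ = fps_X"
definition TT :: ps where "TT = fps_const [:0, 1:]"

text \<open>Reciprocal of a power series with constant term 1 (the unique right inverse).\<close>
definition recip :: "ps \<Rightarrow> ps" where "recip g = fps_right_inverse g 1"

definition qt :: "nat \<Rightarrow> ps" where "qt i = QQ ^ i * TT ^ (2 * (i - 1))"

text \<open>2x2 matrices ((m11,m12),(m21,m22)) acting on column vectors (v1,v2).\<close>
definition mat_vec :: "(ps \<times> ps) \<times> (ps \<times> ps) \<Rightarrow> ps \<times> ps \<Rightarrow> ps \<times> ps" where
  "mat_vec M v = (fst (fst M) * fst v + snd (fst M) * snd v,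
                  fst (snd M) * fst v + snd (snd M) * snd v)"

definition Vk1 :: "nat \<Rightarrow> ps \<times> ps" where
  "Vk1 k = (QQ ^ (2 * k) * TT ^ (4 * (k - 1)) * (TT ^ 2 - 1), QQ ^ k * TT ^ (2 * (k - 1)))"

definition Mks :: "nat \<Rightarrow> nat \<Rightarrow> (ps \<times> ps) \<times> (ps \<times> ps)" where
  "Mks k s =
    ((QQ ^ (2 * (k - s + 1)) * TT ^ (4 * (k - s)) * (TT ^ 2 - 1)
        + (1 - QQ ^ (k - s + 1) * TT ^ (2 * (k - s))) ^ 2,
      QQ ^ (k - s + 1) * TT ^ (2 * (k - s)) * (TT ^ 2 - 1)),
     (QQ ^ (k - s + 1) * TT ^ (2 * (k - s)),
      QQ ^ (2 * (k - s + 1)) * TT ^ (4 * (k - s)) * TT ^ 2))"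

text \<open>Wk k n = M_{k,n+1} ... M_{k,2} V_{k,1}\<close>
primrec Wk :: "nat \<Rightarrow> nat \<Rightarrow> ps \<times> ps" where
  "Wk k 0 = Vk1 k"
| "Wk k (Suc n) = mat_vec (Mks k (n + 2)) (Wk k n)"

definition Vk :: "nat \<Rightarrow> ps \<times> ps" where "Vk k = Wk k (k - 1)"

definition FF :: "nat \<Rightarrow> ps" where
  "FF k = (if k = 1 then QQ ^ 2 * TT ^ 2 - QQ + 1 else fst (Vk k) + snd (Vk k))"

end

theory Submission imports Defs begin

definition qq :: ps where "qq = QQ * TT^2"

lemma qt_X: "qt (Suc i) = fps_X ^ Suc i * TT ^ (2*i)"
  by (simp add: qt_def QQ_def)

lemma qq_pow: "qq ^ i = fps_X ^ i * TT ^ (2*i)"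
  by (simp add: qq_def QQ_def power_mult_distrib power_mult)

lemma X_dvd_coeff: "fps_X ^ m dvd (f::ps) \<Longrightarrow> i < m \<Longrightarrow> f $ i = 0"
  by (auto simp: fps_X_power_mult_nth elim!: dvdE)

lemma coeff_X_dvd: assumes "\<And>i. i < m \<Longrightarrow> (f::ps) $ i = 0" shows "fps_X ^ m dvd f"
proof
  show "f = fps_X ^ m * fps_shift m f"
    by (rule fps_ext) (simp add: fps_X_power_mult_nth assms)
qed

lemma X_dvd_eq: "fps_X ^ m dvd (f - g :: ps) \<Longrightarrow> i < m \<Longrightarrow> f $ i = g $ i"
  using X_dvd_coeff[of m "f - g" i] by simp

lemma qq_0[simp]: "qq $ 0 = 0"
  by (simp add: qq_def QQ_def)

lemma qq_pow_0: "i > 0 \<Longrightarrow> (qq ^ i) $ 0 = 0"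
  by (simp add: qq_pow fps_X_power_mult_nth)

lemma qt_0: "i > 0 \<Longrightarrow> qt i $ 0 = 0"
  by (cases i) (simp_all add: qt_X fps_X_power_mult_nth)

primrec qp :: "nat \<Rightarrow> ps" where
  "qp 0 = 1" | "qp (Suc n) = qp n * (1 - qq ^ Suc n)"

lemma qp_0: "qp n $ 0 = 1"
  by (induction n) (simp_all add: qq_pow_0)

lemma qp_nz: "qp n \<noteq> 0"
  using qp_0[of n] by auto

fun qb :: "nat \<Rightarrow> nat \<Rightarrow> ps" where
  "qb n 0 = 1"
| "qb 0 (Suc j) = 0"
| "qb (Suc n) (Suc j) = qb n (Suc j) + qq ^ (n - j) * qb n j"

lemma qb_zero: "n < j \<Longrightarrow> qb n j = 0"
proof (induction n arbitrary: j)
  case 0 then show ?case by (cases j) auto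
next
  case (Suc n) then show ?case by (cases j) auto
qed

primrec pp :: "nat \<Rightarrow> nat \<Rightarrow> ps" where
  "pp n 0 = 1" | "pp n (Suc j) = pp n j * (1 - qq ^ (n - j))"

lemma qb_closed: "j \<le> n \<Longrightarrow> qb n j * qp j * qp (n - j) = qp n"
proof (induction n arbitrary: j)
  case 0 then show ?case by simp
next
  case (Suc n)
  show ?case
  proof (cases j)
    case 0 then show ?thesis by simp
  next
    case (Suc i)
    with Suc.prems have i: "i \<le> n" by simp
    have h2: "qb n i * qp i * qp (n - i) = qp n" using Suc.IH i by simp
    have h1: "qb n (Suc i) * qp (Suc i) * qp (n - i) = qp n * (1 - qq ^ (n - i))"
    proof (cases "i = n")
      case True then show ?thesis by (simp add: qb_zero)
    next
      case False
      then have "n - i = Suc (n - Suc i)" using i by simp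
      then have e: "qp (n - i) = qp (n - Suc i) * (1 - qq ^ (n - i))" by simp
      have "qb n (Suc i) * qp (Suc i) * qp (n - i) = (qb n (Suc i) * qp (Suc i) * qp (n - Suc i)) * (1 - qq ^ (n - i))"
        by (subst e) (simp only: mult_ac)
      moreover have "qb n (Suc i) * qp (Suc i) * qp (n - Suc i) = qp n" by (rule Suc.IH) (use False i in simp)
      ultimately show ?thesis by metis
    qed
    have "qb (Suc n) j * qp j * qp (Suc n - j)
        = (qb n (Suc i) + qq ^ (n - i) * qb n i) * (qp i * (1 - qq ^ Suc i)) * qp (n - i)"
      using Suc by simp
    also have "\<dots> = qb n (Suc i) * qp (Suc i) * qp (n - i)
         + qq ^ (n - i) * (1 - qq ^ Suc i) * (qb n i * qp i * qp (n - i))"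
      by (simp add: algebra_simps)
    also have "\<dots> = qp n * (1 - qq ^ (n - i)) + qq ^ (n - i) * (1 - qq ^ Suc i) * qp n"
      using h1 h2 by simp
    also have "\<dots> = qp n * (1 - qq ^ (n - i) * qq ^ Suc i)"
      by (simp add: algebra_simps)
    also have "qq ^ (n - i) * qq ^ Suc i = qq ^ Suc n"
      using i by (simp add: power_add[symmetric])
    finally show ?thesis by simp
  qed
qed

lemma pp_closed: "j \<le> n \<Longrightarrow> pp n j * qp (n - j) = qp n"
proof (induction j)
  case 0 then show ?case by simp
next
  case (Suc j)
  then have "n - j = Suc (n - Suc j)" by simp
  then have "qp (n - j) = qp (n - Suc j) * (1 - qq ^ (n - j))" by simp
  with Suc show ?case by (simp add: algebra_simps)
qed

definition CC :: "nat \<Rightarrow> nat \<Rightarrow> ps" where "CC n j = qb n j * pp n j"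

lemma CC_zero: "n < j \<Longrightarrow> CC n j = 0" by (simp add: CC_def qb_zero)
lemma CC_0[simp]: "CC n 0 = 1" by (simp add: CC_def)

lemma CC_closed: "j \<le> n \<Longrightarrow> CC n j * qp j * qp (n - j) ^ 2 = qp n ^ 2"
proof -
  assume j: "j \<le> n"
  have "CC n j * qp j * qp (n - j) ^ 2 = (qb n j * qp j * qp (n - j)) * (pp n j * qp (n - j))"
    by (simp add: CC_def power2_eq_square algebra_simps)
  also have "\<dots> = qp n ^ 2" using qb_closed[OF j] pp_closed[OF j] by (simp add: power2_eq_square)
  finally show ?thesis .
qed


lemma qq_pow_Suc_n: "j \<le> n \<Longrightarrow> qq ^ Suc n = qq ^ (n - j) * qq ^ Suc j"
  by (simp add: power_add[symmetric])

lemma cancelK: "(x::ps) * K = y * K \<Longrightarrow> K \<noteq> 0 \<Longrightarrow> x = y"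
  by simp

lemma CC_K1: "j \<le> n \<Longrightarrow> CC n (Suc j) * (qp (Suc j) * qp (n - j) ^ 2) = qp n ^ 2 * (1 - qq ^ (n - j)) ^ 2"
proof -
  assume j: "j \<le> n"
  show ?thesis
  proof (cases "j = n")
    case True then show ?thesis by (simp add: CC_zero)
  next
    case False
    then have "n - j = Suc (n - Suc j)" using j by simp
    then have e: "qp (n - j) = qp (n - Suc j) * (1 - qq ^ (n - j))" by simp
    have "CC n (Suc j) * (qp (Suc j) * qp (n - j) ^ 2) = (CC n (Suc j) * qp (Suc j) * qp (n - Suc j) ^ 2) * (1 - qq ^ (n - j)) ^ 2"
      by (subst e) (simp only: mult_ac power_mult_distrib)
    also have "CC n (Suc j) * qp (Suc j) * qp (n - Suc j) ^ 2 = qp n ^ 2"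
      by (rule CC_closed) (use False j in simp)
    finally show ?thesis .
  qed
qed

lemma CC_K2: "j \<le> n \<Longrightarrow> CC n j * (qp (Suc j) * qp (n - j) ^ 2) = qp n ^ 2 * (1 - qq ^ Suc j)"
proof -
  assume j: "j \<le> n"
  have e: "qp (Suc j) = qp j * (1 - qq ^ Suc j)" by simp
  have "CC n j * (qp (Suc j) * qp (n - j) ^ 2) = (CC n j * qp j * qp (n - j) ^ 2) * (1 - qq ^ Suc j)"
    by (subst e) (simp only: mult_ac)
  also have "CC n j * qp j * qp (n - j) ^ 2 = qp n ^ 2" by (rule CC_closed[OF j])
  finally show ?thesis .
qed

lemma CC_K0: "j \<le> n \<Longrightarrow> CC (Suc n) (Suc j) * (qp (Suc j) * qp (n - j) ^ 2) = qp n ^ 2 * (1 - qq ^ Suc n) ^ 2"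
proof -
  assume j: "j \<le> n"
  have "CC (Suc n) (Suc j) * (qp (Suc j) * qp (n - j) ^ 2) = CC (Suc n) (Suc j) * qp (Suc j) * qp (Suc n - Suc j) ^ 2"
    by (simp only: mult_ac diff_Suc_Suc)
  also have "\<dots> = qp (Suc n) ^ 2" by (rule CC_closed) (use j in simp)
  also have "\<dots> = qp n ^ 2 * (1 - qq ^ Suc n) ^ 2" by (simp only: qp.simps power_mult_distrib)
  finally show ?thesis .
qed

lemma ident1: "(p::ps) * (1 - A * B) ^ 2 = p * (1 - A) ^ 2 + A * (2 - A * B - A) * (p * (1 - B))"
  by (simp add: algebra_simps power2_eq_square)

lemma ident2: "(p::ps) * (1 - A * B) ^ 2 = B * (p * (1 - A) ^ 2) + (1 - A * A * B) * (p * (1 - B))"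
  by (simp add: algebra_simps power2_eq_square)

lemma R1: "j \<le> n \<Longrightarrow> CC (Suc n) (Suc j) = CC n (Suc j) + qq ^ (n - j) * (2 - qq ^ Suc n - qq ^ (n - j)) * CC n j"
proof -
  assume j: "j \<le> n"
  let ?K = "qp (Suc j) * qp (n - j) ^ 2"
  have K: "?K \<noteq> 0" by (simp del: qp.simps add: qp_nz)
  show ?thesis
  proof (rule cancelK[OF _ K])
    have "(CC n (Suc j) + qq ^ (n - j) * (2 - qq ^ Suc n - qq ^ (n - j)) * CC n j) * ?K
        = CC n (Suc j) * ?K + qq ^ (n - j) * (2 - qq ^ Suc n - qq ^ (n - j)) * (CC n j * ?K)"
      by (simp only: algebra_simps)
    also have "\<dots> = qp n ^ 2 * (1 - qq ^ (n - j)) ^ 2 + qq ^ (n - j) * (2 - qq ^ (n - j) * qq ^ Suc j - qq ^ (n - j)) * (qp n ^ 2 * (1 - qq ^ Suc j))"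
      by (simp only: CC_K1[OF j] CC_K2[OF j] qq_pow_Suc_n[OF j])
    also have "\<dots> = qp n ^ 2 * (1 - qq ^ (n - j) * qq ^ Suc j) ^ 2"
      by (rule ident1[symmetric])
    also have "\<dots> = CC (Suc n) (Suc j) * ?K"
      by (simp only: CC_K0[OF j] qq_pow_Suc_n[OF j])
    finally show "CC (Suc n) (Suc j) * ?K = (CC n (Suc j) + qq ^ (n - j) * (2 - qq ^ Suc n - qq ^ (n - j)) * CC n j) * ?K"
      by (rule sym)
  qed
qed

lemma R2: "j \<le> n \<Longrightarrow> CC (Suc n) (Suc j) = qq ^ Suc j * CC n (Suc j) + (1 - qq ^ (2 * n + 1 - j)) * CC n j"
proof -
  assume j: "j \<le> n"
  let ?K = "qp (Suc j) * qp (n - j) ^ 2"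
  have K: "?K \<noteq> 0" by (simp del: qp.simps add: qp_nz)
  have "2 * n + 1 - j = (n - j) + (n - j) + Suc j" using j by simp
  then have e2: "qq ^ (2 * n + 1 - j) = qq ^ (n - j) * qq ^ (n - j) * qq ^ Suc j"
    by (simp only: power_add)
  show ?thesis
  proof (rule cancelK[OF _ K])
    have "(qq ^ Suc j * CC n (Suc j) + (1 - qq ^ (2 * n + 1 - j)) * CC n j) * ?K
        = qq ^ Suc j * (CC n (Suc j) * ?K) + (1 - qq ^ (2 * n + 1 - j)) * (CC n j * ?K)"
      by (simp only: algebra_simps)
    also have "\<dots> = qq ^ Suc j * (qp n ^ 2 * (1 - qq ^ (n - j)) ^ 2) + (1 - qq ^ (n - j) * qq ^ (n - j) * qq ^ Suc j) * (qp n ^ 2 * (1 - qq ^ Suc j))"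
      by (simp only: CC_K1[OF j] CC_K2[OF j] e2)
    also have "\<dots> = qp n ^ 2 * (1 - qq ^ (n - j) * qq ^ Suc j) ^ 2"
      by (rule ident2[symmetric])
    also have "\<dots> = CC (Suc n) (Suc j) * ?K"
      by (simp only: CC_K0[OF j] qq_pow_Suc_n[OF j])
    finally show "CC (Suc n) (Suc j) * ?K = (qq ^ Suc j * CC n (Suc j) + (1 - qq ^ (2 * n + 1 - j)) * CC n j) * ?K"
      by (rule sym)
  qed
qed


primrec ss :: "nat \<Rightarrow> ps" where
  "ss 0 = 1" | "ss (Suc j) = - (ss j * qt (Suc j))"

lemma qt_qq: "j \<le> k \<Longrightarrow> qt (Suc j) * qq ^ (k - j) = qt (Suc k)"
proof -
  assume j: "j \<le> k"
  have "qt (Suc j) * qq ^ (k - j) = fps_X ^ Suc j * fps_X ^ (k - j) * (TT ^ (2 * j) * TT ^ (2 * (k - j)))"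
    by (simp add: qt_X qq_pow mult_ac)
  also have "\<dots> = fps_X ^ (Suc j + (k - j)) * TT ^ (2 * j + 2 * (k - j))"
    by (simp only: power_add)
  also have "Suc j + (k - j) = Suc k" using j by simp
  also have "2 * j + 2 * (k - j) = 2 * k" using j by simp
  finally show ?thesis by (simp add: qt_X)
qed

lemma ss_shift: "j \<le> k \<Longrightarrow> ss (Suc j) * qq ^ (k - j) = - (ss j * qt (Suc k))"
  using qt_qq[of j k] by (simp add: mult.assoc)

lemma qt_TT: "qt (Suc k) * TT ^ 2 = qq ^ Suc k"
proof -
  have "qq ^ Suc k = fps_X ^ Suc k * TT ^ (2 * k + 2)" by (simp only: qq_pow) simp
  then show ?thesis by (simp add: qt_X power_add mult.assoc power2_eq_square)
qed

definition aa :: "nat \<Rightarrow> ps" where "aa k = (\<Sum>j\<le>k. ss j * CC k j)"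
definition bb :: "nat \<Rightarrow> ps" where "bb k = (\<Sum>j\<le>k. ss j * CC k j * qq ^ (k - j))"

lemma aa_ext: "(\<Sum>j\<le>Suc k. ss j * CC k j) = aa k"
  by (simp add: aa_def CC_zero)

lemma s1: "(\<Sum>j\<le>k. ss (Suc j) * CC k (Suc j)) = aa k - 1"
proof -
  have "aa k = (\<Sum>j\<le>Suc k. ss j * CC k j)" by (rule aa_ext[symmetric])
  also have "\<dots> = 1 + (\<Sum>j\<le>k. ss (Suc j) * CC k (Suc j))"
    by (subst sum.atMost_Suc_shift) simp
  finally show ?thesis by simp
qed

lemma aa_step: "aa (Suc k) = aa k * (1 - 2 * qt (Suc k) + qt (Suc k) * qq ^ Suc k) + bb k * qt (Suc k)"
proof -
  let ?x = "qt (Suc k)" and ?Q = "qq ^ Suc k"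
  have "aa (Suc k) = 1 + (\<Sum>j\<le>k. ss (Suc j) * CC (Suc k) (Suc j))"
    unfolding aa_def by (subst sum.atMost_Suc_shift) simp
  also have "(\<Sum>j\<le>k. ss (Suc j) * CC (Suc k) (Suc j))
     = (\<Sum>j\<le>k. ss (Suc j) * CC k (Suc j)) + (\<Sum>j\<le>k. - (?x * (2 - ?Q)) * (ss j * CC k j) + ?x * (ss j * CC k j * qq ^ (k - j)))"
  proof -
    have "ss (Suc j) * CC (Suc k) (Suc j) = ss (Suc j) * CC k (Suc j) + (- (?x * (2 - ?Q)) * (ss j * CC k j) + ?x * (ss j * CC k j * qq ^ (k - j)))"
      if "j \<in> {..k}" for j
    proof -
      from that have j: "j \<le> k" by simp
      have "ss (Suc j) * CC (Suc k) (Suc j) = ss (Suc j) * CC k (Suc j) + (ss (Suc j) * qq ^ (k - j)) * (2 - ?Q - qq ^ (k - j)) * CC k j"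
        by (simp add: R1[OF j] algebra_simps)
      also have "\<dots> = ss (Suc j) * CC k (Suc j) + (- (ss j * ?x)) * (2 - ?Q - qq ^ (k - j)) * CC k j"
        by (simp only: ss_shift[OF j])
      finally show ?thesis by (simp add: algebra_simps)
    qed
    then show ?thesis unfolding sum.distrib[symmetric] by (rule sum.cong[OF refl])
  qed
  also have "(\<Sum>j\<le>k. - (?x * (2 - ?Q)) * (ss j * CC k j) + ?x * (ss j * CC k j * qq ^ (k - j)))
      = - (?x * (2 - ?Q)) * aa k + ?x * bb k"
    by (simp only: sum.distrib sum_distrib_left[symmetric] aa_def bb_def)
  finally have "aa (Suc k) = 1 + ((\<Sum>j\<le>k. ss (Suc j) * CC k (Suc j)) + (- (?x * (2 - ?Q)) * aa k + ?x * bb k))" .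
  then have "aa (Suc k) = 1 + ((aa k - 1) + (- (?x * (2 - ?Q)) * aa k + ?x * bb k))" by (simp only: s1)
  then show ?thesis by (simp add: algebra_simps)
qed

lemma bb_step: "bb (Suc k) = aa k * (qq ^ Suc k - qt (Suc k)) + bb k * (qt (Suc k) * qq ^ Suc k)"
proof -
  let ?x = "qt (Suc k)" and ?Q = "qq ^ Suc k"
  have "bb (Suc k) = ?Q + (\<Sum>j\<le>k. ss (Suc j) * CC (Suc k) (Suc j) * qq ^ (k - j))"
    unfolding bb_def by (subst sum.atMost_Suc_shift) simp
  also have "(\<Sum>j\<le>k. ss (Suc j) * CC (Suc k) (Suc j) * qq ^ (k - j))
     = (\<Sum>j\<le>k. ?Q * (ss (Suc j) * CC k (Suc j)) + (- ?x * (ss j * CC k j) + ?x * ?Q * (ss j * CC k j * qq ^ (k - j))))"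
  proof (rule sum.cong[OF refl])
    fix j assume "j \<in> {..k}"
    then have j: "j \<le> k" by simp
    have e1: "qq ^ Suc j * qq ^ (k - j) = ?Q" using j by (simp add: power_add[symmetric])
    have "2 * k + 1 - j = Suc k + (k - j)" using j by simp
    then have e2: "qq ^ (2 * k + 1 - j) = ?Q * qq ^ (k - j)" by (simp only: power_add)
    have "ss (Suc j) * CC (Suc k) (Suc j) * qq ^ (k - j)
        = (qq ^ Suc j * qq ^ (k - j)) * (ss (Suc j) * CC k (Suc j)) + (ss (Suc j) * qq ^ (k - j)) * (1 - qq ^ (2 * k + 1 - j)) * CC k j"
      by (simp add: R2[OF j] algebra_simps)
    also have "\<dots> = ?Q * (ss (Suc j) * CC k (Suc j)) + (- (ss j * ?x)) * (1 - ?Q * qq ^ (k - j)) * CC k j"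
      by (simp only: e1 e2 ss_shift[OF j])
    finally show "ss (Suc j) * CC (Suc k) (Suc j) * qq ^ (k - j) = ?Q * (ss (Suc j) * CC k (Suc j)) + (- ?x * (ss j * CC k j) + ?x * ?Q * (ss j * CC k j * qq ^ (k - j)))"
      by (simp add: algebra_simps)
  qed
  also have "\<dots> = ?Q * (aa k - 1) + (- ?x * aa k + ?x * ?Q * bb k)"
    by (simp only: sum.distrib sum_distrib_left[symmetric] s1 aa_def[symmetric] bb_def[symmetric])
  finally show ?thesis by (simp add: algebra_simps)
qed


definition MM :: "nat \<Rightarrow> (ps \<times> ps) \<times> (ps \<times> ps)" where
  "MM m = ((qt m ^ 2 * (TT ^ 2 - 1) + (1 - qt m) ^ 2, qt m * (TT ^ 2 - 1)), (qt m, qt m ^ 2 * TT ^ 2))"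

definition rowmul :: "ps \<times> ps \<Rightarrow> (ps \<times> ps) \<times> (ps \<times> ps) \<Rightarrow> ps \<times> ps" where
  "rowmul r M = (fst r * fst (fst M) + snd r * fst (snd M), fst r * snd (fst M) + snd r * snd (snd M))"

definition dot :: "ps \<times> ps \<Rightarrow> ps \<times> ps \<Rightarrow> ps" where
  "dot r v = fst r * fst v + snd r * snd v"

lemma dot_mv: "dot r (mat_vec M v) = dot (rowmul r M) v"
  by (simp add: dot_def mat_vec_def rowmul_def algebra_simps)

lemma qt_sq: "qt (Suc m) ^ 2 = QQ ^ (2 * Suc m) * TT ^ (4 * m)"
proof -
  have "qt (Suc m) ^ 2 = QQ ^ (Suc m * 2) * TT ^ (2 * m * 2)"
    by (simp only: qt_def power_mult_distrib power_mult diff_Suc_1)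
  then show ?thesis by (simp add: mult.commute)
qed

lemma Mks_MM: "Mks k s = MM (Suc (k - s))"
proof -
  have a: "QQ ^ (k - s + 1) * TT ^ (2 * (k - s)) = qt (Suc (k - s))" by (simp add: qt_def)
  have b: "QQ ^ (2 * (k - s + 1)) * TT ^ (4 * (k - s)) = qt (Suc (k - s)) ^ 2" by (simp add: qt_sq)
  show ?thesis unfolding Mks_def MM_def a b by simp
qed

lemma Vk1_alt: "Vk1 (Suc m) = (qt (Suc m) ^ 2 * (TT ^ 2 - 1), qt (Suc m))"
  by (simp add: Vk1_def qt_sq) (simp add: qt_def)

fun G :: "ps \<times> ps \<Rightarrow> nat \<Rightarrow> nat \<Rightarrow> ps \<times> ps" where
  "G r m 0 = r"
| "G r m (Suc n) = G (rowmul r (MM m)) (Suc m) n"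

lemma G_snoc: "G r m (Suc n) = rowmul (G r m n) (MM (m + n))"
  by (induction n arbitrary: r m) auto

primrec U :: "nat \<Rightarrow> ps \<times> ps" where
  "U 0 = (1, 1)" | "U (Suc n) = rowmul (U n) (MM (Suc n))"

lemma G_U: "G (1, 1) 1 n = U n"
  by (induction n) (simp_all only: G_snoc U.simps G.simps, simp)

lemma Wk_G: "n < k \<Longrightarrow> dot r (Wk k n) = dot (G r (k - n) n) (Vk1 k)"
proof (induction n arbitrary: r)
  case 0 then show ?case by simp
next
  case (Suc n)
  have e: "Mks k (Suc (Suc n)) = MM (k - Suc n)"
    using Suc.prems by (simp add: Mks_MM Suc_diff_Suc)
  have e2: "Suc (k - Suc n) = k - n" using Suc.prems by simp
  have "dot r (Wk k (Suc n)) = dot (rowmul r (MM (k - Suc n))) (Wk k n)"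
    by (simp add: e dot_mv)
  also have "\<dots> = dot (G (rowmul r (MM (k - Suc n))) (k - n) n) (Vk1 k)"
    using Suc by simp
  also have "\<dots> = dot (G r (k - Suc n) (Suc n)) (Vk1 k)"
    by (simp add: e2)
  finally show ?case .
qed

lemma FF_U: "1 \<le> n \<Longrightarrow> FF (Suc n) = dot (U n) (Vk1 (Suc n))"
proof -
  assume n: "1 \<le> n"
  have "FF (Suc n) = dot (1, 1) (Wk (Suc n) n)"
    using n by (simp add: FF_def Vk_def dot_def)
  also have "\<dots> = dot (G (1, 1) 1 n) (Vk1 (Suc n))"
    by (subst Wk_G) simp_all
  also have "G (1, 1) 1 n = U n" by (rule G_U)
  finally show ?thesis .
qed

lemma U_closed: "U k = (aa k, bb k)"
proof (induction k)
  case 0 then show ?case by (simp add: aa_def bb_def CC_def)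
next
  case (Suc k)
  let ?x = "qt (Suc k)"
  have m11: "?x ^ 2 * (TT ^ 2 - 1) + (1 - ?x) ^ 2 = 1 - 2 * ?x + ?x * (?x * TT ^ 2)"
    by (simp add: algebra_simps power2_eq_square)
  have m12: "?x * (TT ^ 2 - 1) = ?x * TT ^ 2 - ?x" by (simp add: algebra_simps)
  have m22: "?x ^ 2 * TT ^ 2 = ?x * (?x * TT ^ 2)" by (simp add: power2_eq_square)
  have Ux: "U (Suc k) = (aa k * (?x^2*(TT^2-1) + (1-?x)^2) + bb k * ?x, aa k * (?x*(TT^2-1)) + bb k * (?x^2 * TT^2))"
    using Suc by (simp add: rowmul_def MM_def)
  have m11': "?x^2*(TT^2-1) + (1-?x)^2 = 1 - 2*?x + ?x * qq^Suc k" by (simp only: m11 qt_TT)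
  have m12': "?x*(TT^2-1) = qq^Suc k - ?x" by (simp only: m12 qt_TT)
  have m22': "?x^2*TT^2 = ?x * qq^Suc k" by (simp only: m22 qt_TT)
  show ?case by (simp only: Ux m11' m12' m22' aa_step bb_step)
qed

lemma FF_1: "FF 1 = aa 1"
proof -
  have "aa 1 = fst (U 1)" by (simp add: U_closed)
  also have "\<dots> = QQ ^ 2 * TT ^ 2 - QQ + 1"
    by (simp add: rowmul_def MM_def qt_def algebra_simps power2_eq_square)
  finally show ?thesis by (simp add: FF_def)
qed

lemma FF_step: "1 \<le> n \<Longrightarrow> FF (Suc n) = aa (Suc n) - (1 - qt (Suc n)) ^ 2 * aa n"
proof -
  assume n: "1 \<le> n"
  let ?x = "qt (Suc n)"
  have "FF (Suc n) = dot (aa n, bb n) (Vk1 (Suc n))" using FF_U[OF n] U_closed by simp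
  then have f: "FF (Suc n) = aa n * (?x ^ 2 * (TT ^ 2 - 1)) + bb n * ?x" by (simp add: dot_def Vk1_alt)
  have a: "aa (Suc n) = aa n * (?x^2*(TT^2-1) + (1-?x)^2) + bb n * ?x"
    using U_closed[of "Suc n"] U_closed[of n] by (simp add: rowmul_def MM_def)
  show ?thesis unfolding f a by (simp add: algebra_simps)
qed


primrec PP :: "nat \<Rightarrow> ps" where
  "PP 0 = 1" | "PP (Suc n) = PP n * (1 - qt (Suc n))"

lemma PP_prod: "(\<Prod>i=1..n. (1 - qt i)) = PP n"
  by (induction n) (simp_all add: atLeastAtMostSuc_conv mult.commute)

lemma PP_atMost: "(\<Prod>i\<le>n. (1 - qt (Suc i))) = PP (Suc n)"
  by (induction n) (simp_all add: mult.commute)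

lemma PP_0: "PP n $ 0 = 1"
  by (induction n) (simp_all add: qt_0)

lemma qb_top: "qb n (Suc n) = 0" by (simp add: qb_zero)

lemma Rothe: "PP n = (\<Sum>j\<le>n. ss j * qb n j)"
proof (induction n)
  case 0 then show ?case by simp
next
  case (Suc n)
  let ?x = "qt (Suc n)"
  have t1: "(\<Sum>j\<le>n. ss (Suc j) * qb n (Suc j)) = PP n - 1"
  proof -
    have "PP n = (\<Sum>j\<le>Suc n. ss j * qb n j)" using Suc by (simp add: qb_top)
    also have "\<dots> = 1 + (\<Sum>j\<le>n. ss (Suc j) * qb n (Suc j))"
      by (subst sum.atMost_Suc_shift) simp
    finally show ?thesis by simp
  qed
  have t2: "(\<Sum>j\<le>n. ss (Suc j) * (qq ^ (n - j) * qb n j)) = - ?x * PP n"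
  proof -
    have "(\<Sum>j\<le>n. ss (Suc j) * (qq ^ (n - j) * qb n j)) = (\<Sum>j\<le>n. - ?x * (ss j * qb n j))"
    proof (rule sum.cong[OF refl])
      fix j assume "j \<in> {..n}"
      then have j: "j \<le> n" by simp
      have "ss (Suc j) * (qq ^ (n - j) * qb n j) = (ss (Suc j) * qq ^ (n - j)) * qb n j"
        by (simp only: mult.assoc)
      also have "\<dots> = - ?x * (ss j * qb n j)" by (simp only: ss_shift[OF j]) (simp add: algebra_simps)
      finally show "ss (Suc j) * (qq ^ (n - j) * qb n j) = - ?x * (ss j * qb n j)" .
    qed
    also have "\<dots> = - ?x * PP n" by (simp only: sum_distrib_left[symmetric] Suc[symmetric])
    finally show ?thesis .
  qed
  have "(\<Sum>j\<le>Suc n. ss j * qb (Suc n) j) = 1 + (\<Sum>j\<le>n. ss (Suc j) * qb (Suc n) (Suc j))"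
    by (subst sum.atMost_Suc_shift) simp
  also have "\<dots> = 1 + ((\<Sum>j\<le>n. ss (Suc j) * qb n (Suc j)) + (\<Sum>j\<le>n. ss (Suc j) * (qq ^ (n - j) * qb n j)))"
    by (simp only: qb.simps distrib_left sum.distrib)
  also have "\<dots> = PP (Suc n)" by (simp only: t1 t2) (simp add: algebra_simps)
  finally show ?case by simp
qed

lemma X_ss: "fps_X ^ j dvd ss j"
proof (induction j)
  case 0 then show ?case by simp
next
  case (Suc j)
  have "fps_X dvd qt (Suc j)" by (simp add: qt_X)
  then have "fps_X ^ j * fps_X dvd ss j * qt (Suc j)" using Suc by (rule mult_dvd_mono[rotated])
  then show ?case by (simp add: mult.commute)
qed

lemma X_pow_dvd: "m \<le> i \<Longrightarrow> fps_X ^ m dvd (fps_X ^ i :: ps)"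
  by (rule le_imp_power_dvd)

lemma X_qq: "m \<le> i \<Longrightarrow> fps_X ^ m dvd qq ^ i"
  unfolding qq_pow by (rule dvd_mult2) (rule X_pow_dvd)

lemma X_qt: "m \<le> Suc i \<Longrightarrow> fps_X ^ m dvd qt (Suc i)"
  unfolding qt_X by (rule dvd_mult2) (rule X_pow_dvd)

lemma X_pp: "j \<le> n \<Longrightarrow> fps_X ^ (n + 1 - j) dvd (pp n j - 1)"
proof (induction j)
  case 0 then show ?case by simp
next
  case (Suc j)
  then have j: "j < n" by simp
  have "fps_X ^ (n - j) dvd (fps_X ^ (n + 1 - j) :: ps)" by (rule X_pow_dvd) simp
  then have a: "fps_X ^ (n - j) dvd pp n j - 1" using Suc j by (meson dvd_trans less_imp_le)
  have b: "fps_X ^ (n - j) dvd pp n j * qq ^ (n - j)" by (rule dvd_mult, rule X_qq) simp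
  have e: "pp n (Suc j) - 1 = (pp n j - 1) - pp n j * qq ^ (n - j)" by (simp add: algebra_simps)
  have e2: "n + 1 - Suc j = n - j" by simp
  show ?case unfolding e e2 by (rule dvd_diff[OF a b])
qed

lemma aa_PP: "fps_X ^ Suc n dvd aa n - PP n"
proof -
  have "aa n - PP n = (\<Sum>j\<le>n. ss j * (qb n j * (pp n j - 1)))"
    by (simp add: aa_def Rothe CC_def sum_subtractf[symmetric] algebra_simps)
  also have "fps_X ^ Suc n dvd \<dots>"
  proof (rule dvd_sum)
    fix j assume "j \<in> {..n}"
    then have j: "j \<le> n" by simp
    show "fps_X ^ Suc n dvd ss j * (qb n j * (pp n j - 1))"
    proof (cases j)
      case 0 then show ?thesis by simp
    next
      case (Suc i)
      have d: "fps_X ^ j * fps_X ^ (n + 1 - j) dvd ss j * (qb n j * (pp n j - 1))"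
        by (rule mult_dvd_mono[OF X_ss]) (rule dvd_mult, rule X_pp[OF j])
      have "j + (n + 1 - j) = Suc n" using j by simp
      then have e: "(fps_X ^ j * fps_X ^ (n + 1 - j) :: ps) = fps_X ^ Suc n"
        by (simp only: power_add[symmetric])
      show ?thesis using d by (simp only: e)
    qed
  qed
  finally show ?thesis .
qed

lemma X_PP: "n \<le> M \<Longrightarrow> fps_X ^ Suc n dvd PP M - PP n"
proof (induction M rule: dec_induct)
  case base then show ?case by simp
next
  case (step M)
  have e: "PP (Suc M) - PP n = (PP M - PP n) - PP M * qt (Suc M)" by (simp add: algebra_simps)
  have b: "fps_X ^ Suc n dvd PP M * qt (Suc M)" by (rule dvd_mult) (rule X_qt, use step in simp)
  show ?case unfolding e by (rule dvd_diff[OF step.IH b])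
qed

definition Pinf :: ps where "Pinf = Abs_fps (\<lambda>m. PP m $ m)"

lemma PP_stable: "i \<le> n \<Longrightarrow> PP n $ i = PP i $ i"
  by (rule X_dvd_eq[OF X_PP]) simp_all

lemma Pinf_PP: "fps_X ^ Suc n dvd Pinf - PP n"
proof (rule coeff_X_dvd)
  fix i assume "i < Suc n"
  then have "PP n $ i = PP i $ i" by (intro PP_stable) simp
  then show "(Pinf - PP n) $ i = 0" by (simp add: Pinf_def)
qed

lemma Pinf_0: "Pinf $ 0 = 1" by (simp add: Pinf_def PP_0)

lemma recip_r: "f $ 0 = 1 \<Longrightarrow> f * recip f = 1"
  unfolding recip_def by (rule fps_right_inverse) simp

lemma recip_unique: "f $ 0 = 1 \<Longrightarrow> f * u = 1 \<Longrightarrow> recip f = u"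
proof -
  assume f: "f $ 0 = 1" and u: "f * u = 1"
  have "recip f = (u * f) * recip f" using u by (simp add: mult.commute)
  also have "\<dots> = u * (f * recip f)" by (simp only: mult.assoc)
  also have "\<dots> = u" using recip_r[OF f] by simp
  finally show ?thesis .
qed

lemma PP2_0: "(PP n ^ 2) $ 0 = 1" by (simp add: PP_0 fps_nth_power_0)

lemma partial: "1 \<le> n \<Longrightarrow> (\<Sum>j<n. FF (Suc j) * recip (PP (Suc j) ^ 2)) = aa n * recip (PP n ^ 2)"
proof (induction n)
  case 0 then show ?case by simp
next
  case (Suc n)
  show ?case
  proof (cases "n = 0")
    case True
    have "FF (Suc 0) = aa (Suc 0)" using FF_1 by simp
    with True show ?thesis by simp
  next
    case False
    then have n: "1 \<le> n" by simp
    let ?x = "qt (Suc n)"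
    have r: "recip (PP n ^ 2) = (1 - ?x) ^ 2 * recip (PP (Suc n) ^ 2)"
    proof (rule recip_unique[OF PP2_0])
      have "PP n ^ 2 * ((1 - ?x) ^ 2 * recip (PP (Suc n) ^ 2)) = PP (Suc n) ^ 2 * recip (PP (Suc n) ^ 2)"
        by (simp add: power_mult_distrib mult.assoc)
      also have "\<dots> = 1" by (rule recip_r[OF PP2_0])
      finally show "PP n ^ 2 * ((1 - ?x) ^ 2 * recip (PP (Suc n) ^ 2)) = 1" .
    qed
    have "(\<Sum>j<Suc n. FF (Suc j) * recip (PP (Suc j) ^ 2)) = aa n * recip (PP n ^ 2) + FF (Suc n) * recip (PP (Suc n) ^ 2)"
      using Suc.IH[OF n] by simp
    also have "\<dots> = aa (Suc n) * recip (PP (Suc n) ^ 2)"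
      unfolding r FF_step[OF n] by (simp add: algebra_simps)
    finally show ?thesis .
  qed
qed

lemma key: "fps_X ^ Suc n dvd aa n * recip (PP n ^ 2) - recip Pinf"
proof -
  let ?R = "recip (PP n ^ 2)" and ?r = "recip Pinf"
  have h1: "PP n ^ 2 * ?R = 1" by (rule recip_r[OF PP2_0])
  have h2: "Pinf * ?r = 1" by (rule recip_r[OF Pinf_0])
  have "?R * ?r * (aa n * Pinf - PP n ^ 2) = aa n * ?R * (Pinf * ?r) - ?r * (PP n ^ 2 * ?R)"
    by (simp add: algebra_simps)
  also have "\<dots> = aa n * ?R - ?r" by (simp only: h1 h2 mult_1_right)
  finally have e: "aa n * ?R - ?r = ?R * ?r * (aa n * Pinf - PP n ^ 2)" by simp
  have "aa n * Pinf - PP n ^ 2 = (aa n - PP n) * Pinf + PP n * (Pinf - PP n)"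
    by (simp add: algebra_simps power2_eq_square)
  moreover have "fps_X ^ Suc n dvd (aa n - PP n) * Pinf + PP n * (Pinf - PP n)"
    using aa_PP Pinf_PP by (intro dvd_add dvd_mult dvd_mult2)
  ultimately show ?thesis unfolding e by (intro dvd_mult) simp
qed

theorem mainTheorem7:
  shows "\<exists>P :: ps.
           (\<lambda>i. 1 - qt (Suc i)) has_prod P \<and>
           (\<lambda>j. FF (Suc j) * recip ((\<Prod>i=1..Suc j. (1 - qt i)) ^ 2)) sums recip P"
proof (intro exI conjI)
  show "(\<lambda>i. 1 - qt (Suc i)) has_prod Pinf"
    unfolding has_prod_def raw_has_prod_def
  proof (intro disjI1 conjI)
    show "Pinf \<noteq> 0" using Pinf_0 by auto
    show "(\<lambda>n. \<Prod>i\<le>n. 1 - qt (Suc (i + 0))) \<longlonglongrightarrow> Pinf"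
    proof (rule tendsto_fpsI)
      fix m
      show "\<forall>\<^sub>F n in sequentially. (\<Prod>i\<le>n. 1 - qt (Suc (i + 0))) $ m = Pinf $ m"
        unfolding eventually_sequentially
      proof (intro exI[of _ m] allI impI)
        fix n assume "m \<le> n"
        then have "PP (Suc n) $ m = PP m $ m" by (intro PP_stable) simp
        then show "(\<Prod>i\<le>n. 1 - qt (Suc (i + 0))) $ m = Pinf $ m"
          by (simp add: PP_atMost Pinf_def)
      qed
    qed
  qed
  show "(\<lambda>j. FF (Suc j) * recip ((\<Prod>i=1..Suc j. (1 - qt i)) ^ 2)) sums recip Pinf"
    unfolding sums_def PP_prod
  proof (rule tendsto_fpsI)
    fix m
    show "\<forall>\<^sub>F n in sequentially. (\<Sum>j<n. FF (Suc j) * recip (PP (Suc j) ^ 2)) $ m = recip Pinf $ m"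
      unfolding eventually_sequentially
    proof (intro exI[of _ "Suc m"] allI impI)
      fix n assume n: "Suc m \<le> n"
      have "(\<Sum>j<n. FF (Suc j) * recip (PP (Suc j) ^ 2)) = aa n * recip (PP n ^ 2)"
        by (rule partial) (use n in simp)
      also have "\<dots> $ m = recip Pinf $ m"
        by (rule X_dvd_eq[OF key]) (use n in simp)
      finally show "(\<Sum>j<n. FF (Suc j) * recip (PP (Suc j) ^ 2)) $ m = recip Pinf $ m" .
    qed
  qed
qed

end
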